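(* Let $C\subset[0,1]^2$ be a Cantor set generated by a sequence of positive integers $(n_k)_{k\ge1}$ with $n_{2k-1}\ge n_{2k}$ for all $k$ (construction described in the context). Then $\pi_0(C)=[0,1]$, where $\pi_0(x,y)=x$.
   Context: Let $(n_k)_{k\ge1}$ be positive integers with $n_{2k-1}\ge n_{2k}$ for all $k\ge1$, and set $N_j=n_1+\dots+n_j$, $N_0=0$. All squares below are closed grid squares, i.e. squares $[i4^{-N},(i+1)4^{-N}]\times[j4^{-N},(j+1)4^{-N}]$; a column of width $4^{-N}$ is a strip $[j4^{-N},(j+1)4^{-N}]\times[0,1]$. Let $C_0=\{[0,1]^2\}$. For $k\ge0$, given the collection $C_{2k}$ of squares of side $4^{-N_{2k}}$: (i) each $Q\in C_{2k}$ is subdivided into $4^{2n_{2k+1}}$ squares of side $4^{-N_{2k+1}}$ and $2^{3n_{2k+1}}$ of them are chosen so that each column of width $4^{-N_{2k+1}}$ meeting the interior of $Q$ contains exactly $2^{n_{2k+1}}$ chosen squares inside $Q$; $C_{2k+1}$ is the collection of all chosen squares. (ii) Each square of $C_{2k+1}$ is subdivided into $4^{2n_{2k+2}}$ squares of side $4^{-N_{2k+2}}$ and $2^{n_{2k+2}}$ of them are chosen, so that for each $Q\in C_{2k}$: every column of width $4^{-N_{2k+2}}$ meeting the interior of $Q$ contains at least one chosen square inside $Q$; and among the chosen squares inside $Q$ there are two whose orthogonal projections onto the line $y=x$ coincide, and two whose orthogonal projections onto the line $y=-x$ coincide. $C_{2k+2}$ is the collection of all chosen squares. Identifying $C_m$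 with the union of its squares, the Cantor set generated is $C=\bigcap_{m\ge1}C_m$. *)

theory Defs
  imports "HOL-Analysis.Analysis"
begin

text \<open>The sequence n is indexed from 1 (the value n 0 is irrelevant).
  N_j = n_1 + ... + n_j.\<close>
definition Nsum :: "(nat \<Rightarrow> nat) \<Rightarrow> nat \<Rightarrow> nat" where
  "Nsum n j = (\<Sum>i=1..j. n i)"

definition sq :: "(nat \<Rightarrow> nat) \<Rightarrow> nat \<Rightarrow> nat \<times> nat \<Rightarrow> (real \<times> real) set" where
  "sq n m ij =
     {real (fst ij) / 4 ^ Nsum n m .. real (fst ij + 1) / 4 ^ Nsum n m} \<times>
     {real (snd ij) / 4 ^ Nsum n m .. real (snd ij + 1) / 4 ^ Nsum n m}"

text \<open>P (a grid index d 4-adic refinements finer than Q) lies inside Q.\<close>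
definition inside :: "nat \<Rightarrow> nat \<times> nat \<Rightarrow> nat \<times> nat \<Rightarrow> bool" where
  "inside d Q P \<longleftrightarrow> fst P div 4 ^ d = fst Q \<and> snd P div 4 ^ d = snd Q"

definition proj_diag :: "real \<times> real \<Rightarrow> real \<times> real" where
  "proj_diag p = ((fst p + snd p) / 2, (fst p + snd p) / 2)"

definition proj_anti :: "real \<times> real \<Rightarrow> real \<times> real" where
  "proj_anti p = ((fst p - snd p) / 2, (snd p - fst p) / 2)"

text \<open>Cs m is the collection C_m of chosen squares (given by grid indices at level N_m).\<close>
definition cantor_construction :: "(nat \<Rightarrow> nat) \<Rightarrow> (nat \<Rightarrow> (nat \<times> nat) set) \<Rightarrow> bool" where
  "cantor_construction n Cs \<longleftrightarrow>
     Cs 0 = {(0, 0)} \<and>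
     (\<forall>k. let a = n (2*k+1); b = n (2*k+2) in
        \<comment> \<open>step (i)\<close>
        (\<forall>P\<in>Cs (2*k+1). \<exists>Q\<in>Cs (2*k). inside a Q P) \<and>
        (\<forall>Q\<in>Cs (2*k).
            card {P\<in>Cs (2*k+1). inside a Q P} = 2 ^ (3*a) \<and>
            (\<forall>c. c div 4 ^ a = fst Q \<longrightarrow>
                 card {P\<in>Cs (2*k+1). inside a Q P \<and> fst P = c} = 2 ^ a)) \<and>
        \<comment> \<open>step (ii)\<close>
        (\<forall>P\<in>Cs (2*k+2). \<exists>Q\<in>Cs (2*k+1). inside b Q P) \<and>
        (\<forall>Q\<in>Cs (2*k+1). card {P\<in>Cs (2*k+2). inside b Q P} = 2 ^ b) \<and>
        (\<forall>Q\<in>Cs (2*k).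
            (\<forall>c. c div 4 ^ (a+b) = fst Q \<longrightarrow>
                 (\<exists>P\<in>Cs (2*k+2). inside (a+b) Q P \<and> fst P = c)) \<and>
            (\<exists>P1\<in>Cs (2*k+2). \<exists>P2\<in>Cs (2*k+2).
                 inside (a+b) Q P1 \<and> inside (a+b) Q P2 \<and> P1 \<noteq> P2 \<and>
                 proj_diag ` sq n (2*k+2) P1 = proj_diag ` sq n (2*k+2) P2) \<and>
            (\<exists>P1\<in>Cs (2*k+2). \<exists>P2\<in>Cs (2*k+2).
                 inside (a+b) Q P1 \<and> inside (a+b) Q P2 \<and> P1 \<noteq> P2 \<and>
                 proj_anti ` sq n (2*k+2) P1 = proj_anti ` sq n (2*k+2) P2)))"

definition cantor_set :: "(nat \<Rightarrow> nat) \<Rightarrow> (nat \<Rightarrow> (nat \<times> nat) set) \<Rightarrow> (real \<times> real) set" where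
  "cantor_set n Cs = (\<Inter>m\<in>{1..}. \<Union> (sq n m ` Cs m))"

end

theory Submission
  imports Defs
begin

lemma Nsum_Suc: "Nsum n (Suc m) = Nsum n m + n (Suc m)"
  by (simp add: Nsum_def)

lemma cc_parts:
  assumes "cantor_construction n Cs"
  shows "Cs 0 = {(0, 0)}"
    and "\<forall>P\<in>Cs (2*k+1). \<exists>Q\<in>Cs (2*k). inside (n (2*k+1)) Q P"
    and "\<forall>Q\<in>Cs (2*k). (\<forall>c. c div 4 ^ n (2*k+1) = fst Q \<longrightarrow>
                 card {P\<in>Cs (2*k+1). inside (n (2*k+1)) Q P \<and> fst P = c} = 2 ^ n (2*k+1))"
    and "\<forall>P\<in>Cs (2*k+2). \<exists>Q\<in>Cs (2*k+1). inside (n (2*k+2)) Q P"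
    and "\<forall>Q\<in>Cs (2*k). (\<forall>c. c div 4 ^ (n (2*k+1) + n (2*k+2)) = fst Q \<longrightarrow>
                 (\<exists>P\<in>Cs (2*k+2). inside (n (2*k+1) + n (2*k+2)) Q P \<and> fst P = c))"
proof -
  note h = assms[unfolded cantor_construction_def Let_def]
  note hk = spec[OF conjunct2[OF h], of k]
  show "Cs 0 = {(0, 0)}" using h by (rule conjunct1)
  show "\<forall>P\<in>Cs (2*k+1). \<exists>Q\<in>Cs (2*k). inside (n (2*k+1)) Q P" using hk by (rule conjunct1)
  show "\<forall>Q\<in>Cs (2*k). (\<forall>c. c div 4 ^ n (2*k+1) = fst Q \<longrightarrow>
                 card {P\<in>Cs (2*k+1). inside (n (2*k+1)) Q P \<and> fst P = c} = 2 ^ n (2*k+1))"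
    using conjunct1[OF conjunct2[OF hk]] by blast
  show "\<forall>P\<in>Cs (2*k+2). \<exists>Q\<in>Cs (2*k+1). inside (n (2*k+2)) Q P"
    using conjunct1[OF conjunct2[OF conjunct2[OF hk]]] .
  show "\<forall>Q\<in>Cs (2*k). (\<forall>c. c div 4 ^ (n (2*k+1) + n (2*k+2)) = fst Q \<longrightarrow>
                 (\<exists>P\<in>Cs (2*k+2). inside (n (2*k+1) + n (2*k+2)) Q P \<and> fst P = c))"
    using conjunct2[OF conjunct2[OF conjunct2[OF conjunct2[OF hk]]]] by blast
qed

lemma cc_A:
  assumes "cantor_construction n Cs" "P \<in> Cs (Suc m)"
  shows "\<exists>Q\<in>Cs m. inside (n (Suc m)) Q P"
proof (cases "even m")
  case True
  then obtain k where k: "m = 2*k" by (auto elim: evenE)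
  have e: "Suc m = 2*k+1" using k by simp
  have P: "P \<in> Cs (2*k+1)" using assms(2) e by simp
  then obtain Q where "Q \<in> Cs (2*k)" "inside (n (2*k+1)) Q P" using cc_parts(2)[OF assms(1), of k] by blast
  then show ?thesis using k e by (simp; blast)
next
  case False
  then obtain k where k: "m = 2*k+1" by (auto elim: oddE)
  have e: "Suc m = 2*k+2" using k by simp
  have P: "P \<in> Cs (2*k+2)" using assms(2) e by simp
  then obtain Q where "Q \<in> Cs (2*k+1)" "inside (n (2*k+2)) Q P" using cc_parts(4)[OF assms(1), of k] by blast
  then show ?thesis using k e by (simp; blast)
qed

lemma cc_B:
  assumes "cantor_construction n Cs"
  shows "c < 4 ^ Nsum n (2*k) \<Longrightarrow> \<exists>Q\<in>Cs (2*k). fst Q = c"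
proof (induction k arbitrary: c)
  case 0
  then show ?case using cc_parts(1)[OF assms] by (simp add: Nsum_def)
next
  case (Suc k)
  have N: "Nsum n (2*Suc k) = Nsum n (2*k) + (n (2*k+1) + n (2*k+2))"
    by (simp add: Nsum_def)
  have "c div 4 ^ (n (2*k+1) + n (2*k+2)) < 4 ^ Nsum n (2*k)"
  proof -
    have "c < 4 ^ Nsum n (2*k) * 4 ^ (n (2*k+1) + n (2*k+2))"
      using Suc.prems by (simp only: N power_add)
    then show ?thesis by (simp add: div_less_iff_less_mult)
  qed
  then obtain Q where Q: "Q \<in> Cs (2*k)" "fst Q = c div 4 ^ (n (2*k+1) + n (2*k+2))"
    using Suc.IH by blast
  have e: "2 * Suc k = 2*k+2" by simp
  show ?case using cc_parts(5)[OF assms, of k] Q(1) Q(2)[symmetric] unfolding e by blast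
qed

lemma cc_C:
  assumes "cantor_construction n Cs" "c < 4 ^ Nsum n m"
  shows "\<exists>P\<in>Cs m. fst P = c"
proof (cases "even m")
  case True
  then obtain k where k: "m = 2*k" by (auto elim: evenE)
  then show ?thesis using cc_B assms by blast
next
  case False
  then obtain k where k: "m = 2*k+1" by (auto elim: oddE)
  have N: "Nsum n m = Nsum n (2*k) + n (2*k+1)" using k by (simp add: Nsum_def)
  have "c div 4 ^ n (2*k+1) < 4 ^ Nsum n (2*k)"
  proof -
    have "c < 4 ^ Nsum n (2*k) * 4 ^ n (2*k+1)"
      using assms(2) by (simp only: N power_add)
    then show ?thesis by (simp add: div_less_iff_less_mult)
  qed
  then obtain Q where Q: "Q \<in> Cs (2*k)" "fst Q = c div 4 ^ n (2*k+1)"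
    using cc_B assms(1) by blast
  have "card {P\<in>Cs (2*k+1). inside (n (2*k+1)) Q P \<and> fst P = c} = 2 ^ n (2*k+1)"
    using cc_parts(3)[OF assms(1), of k] Q(1) Q(2)[symmetric] by blast
  then have "{P\<in>Cs (2*k+1). inside (n (2*k+1)) Q P \<and> fst P = c} \<noteq> {}"
    by (metis card.empty power_not_zero zero_neq_numeral)
  then show ?thesis using k by blast
qed

lemma cc_bound:
  assumes "cantor_construction n Cs"
  shows "P \<in> Cs m \<Longrightarrow> fst P < 4 ^ Nsum n m \<and> snd P < 4 ^ Nsum n m"
proof (induction m arbitrary: P)
  case 0
  then show ?case using cc_parts(1)[OF assms] by (simp add: Nsum_def)
next
  case (Suc m)
  obtain Q where Q: "Q \<in> Cs m" "inside (n (Suc m)) Q P" using cc_A assms Suc.prems by blast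
  have b: "fst Q < 4 ^ Nsum n m" "snd Q < 4 ^ Nsum n m" using Suc.IH Q(1) by auto
  have "fst P < 4 ^ Nsum n (Suc m)"
  proof -
    have "fst P div 4 ^ n (Suc m) < 4 ^ Nsum n m" using Q(2) b by (simp add: inside_def)
    then show ?thesis by (simp add: Nsum_Suc power_add div_less_iff_less_mult mult.commute)
  qed
  moreover have "snd P < 4 ^ Nsum n (Suc m)"
  proof -
    have "snd P div 4 ^ n (Suc m) < 4 ^ Nsum n m" using Q(2) b by (simp add: inside_def)
    then show ?thesis by (simp add: Nsum_Suc power_add div_less_iff_less_mult mult.commute)
  qed
  ultimately show ?case by simp
qed

lemma finite_Cs:
  assumes "cantor_construction n Cs"
  shows "finite (Cs m)"
proof -
  have "Cs m \<subseteq> {..<4 ^ Nsum n m} \<times> {..<4 ^ Nsum n m}"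
    using cc_bound[OF assms] by fastforce
  then show ?thesis by (rule finite_subset) auto
qed

lemma interval_sub:
  fixes p q N d :: nat
  assumes "p div 4 ^ d = q"
  shows "{real p / 4 ^ (N + d) .. real (p + 1) / 4 ^ (N + d)} \<subseteq> {real q / 4 ^ N .. real (q + 1) / 4 ^ N}"
proof -
  have h1: "q * 4 ^ d \<le> p" using div_times_less_eq_dividend[of p "4 ^ d"] assms by simp
  have "p div 4 ^ d < q + 1" using assms by simp
  then have h2': "p < (q + 1) * 4 ^ d" by (simp add: div_less_iff_less_mult)
  then have h2: "p + 1 \<le> (q + 1) * 4 ^ d" by simp
  have r1': "real (q * 4 ^ d) \<le> real p" using h1 by (simp only: of_nat_le_iff)
  then have r1: "real q * 4 ^ d \<le> real p" by simp
  have r2': "real (p + 1) \<le> real ((q + 1) * 4 ^ d)" using h2 by (simp only: of_nat_le_iff)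
  then have r2: "real p + 1 \<le> (real q + 1) * 4 ^ d" by (simp add: algebra_simps)
  have e: "(4::real) ^ (N + d) = 4 ^ N * 4 ^ d" by (simp add: power_add)
  have "real q / 4 ^ N \<le> real p / 4 ^ (N + d)"
    using r1 by (simp add: e field_simps)
  moreover have "(real p + 1) / 4 ^ (N + d) \<le> (real q + 1) / 4 ^ N"
  proof -
    have "(4::real) ^ N * (real p + 1) \<le> 4 ^ N * ((real q + 1) * 4 ^ d)"
      using r2 by (rule mult_left_mono) simp
    then show ?thesis by (simp add: e field_simps)
  qed
  ultimately show ?thesis by (auto simp add: add.commute)
qed

lemma sq_sub:
  assumes "inside (n (Suc m)) Q P"
  shows "sq n (Suc m) P \<subseteq> sq n m Q"
proof -
  have a: "fst P div 4 ^ n (Suc m) = fst Q" "snd P div 4 ^ n (Suc m) = snd Q"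
    using assms by (auto simp: inside_def)
  show ?thesis unfolding sq_def Nsum_Suc
    using interval_sub[OF a(1), of "Nsum n m"] interval_sub[OF a(2), of "Nsum n m"]
    by (intro Sigma_mono) auto
qed

theorem proposition3p2:
  fixes n :: "nat \<Rightarrow> nat" and Cs :: "nat \<Rightarrow> (nat \<times> nat) set"
  assumes "\<forall>k\<ge>1. 0 < n k"
    and "\<forall>k\<ge>1. n (2*k - 1) \<ge> n (2*k)"
    and "cantor_construction n Cs"
  shows "fst ` cantor_set n Cs = {0..1}"
proof
  show "fst ` cantor_set n Cs \<subseteq> {0..1}"
  proof
    fix x assume "x \<in> fst ` cantor_set n Cs"
    then obtain p where p: "p \<in> cantor_set n Cs" "x = fst p" by auto
    have "p \<in> \<Union> (sq n 1 ` Cs 1)" using p(1) unfolding cantor_set_def by blast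
    then obtain P where P: "P \<in> Cs 1" "p \<in> sq n 1 P" by blast
    have "fst P < 4 ^ Nsum n 1" using cc_bound[OF assms(3) P(1)] by simp
    then have "fst P + 1 \<le> (4::nat) ^ Nsum n 1" by simp
    then have "real (fst P + 1) \<le> 4 ^ Nsum n 1"
      by (metis of_nat_le_iff of_nat_numeral of_nat_power)
    then have "real (fst P + 1) / 4 ^ Nsum n 1 \<le> 1" by simp
    moreover have "fst p \<le> real (fst P + 1) / 4 ^ Nsum n 1" "real (fst P) / 4 ^ Nsum n 1 \<le> fst p"
      using P(2) unfolding sq_def by (auto simp: mem_Times_iff)
    moreover have "0 \<le> real (fst P) / 4 ^ Nsum n 1" by simp
    ultimately have "0 \<le> fst p" "fst p \<le> 1" by linarith+
    then show "x \<in> {0..1}" using p(2) by simp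
  qed
next
  show "{0..1} \<subseteq> fst ` cantor_set n Cs"
  proof
    fix x :: real assume x: "x \<in> {0..1}"
    define S where "S m = (\<Union>P\<in>Cs m. sq n m P) \<inter> ({x} \<times> UNIV)" for m
    have comp: "compact (S m)" for m
    proof -
      have cs: "compact (sq n m P)" for P unfolding sq_def by (intro compact_Times compact_Icc)
      have "compact (\<Union>P\<in>Cs m. sq n m P)"
        using finite_Cs[OF assms(3)] cs by (intro compact_UN) auto
      moreover have "closed ({x} \<times> (UNIV :: real set))" by (intro closed_Times closed_singleton closed_UNIV)
      ultimately show ?thesis unfolding S_def by (rule compact_Int_closed)
    qed
    have ne: "S m \<noteq> {}" for m
    proof -
      define M where "M = (4::nat) ^ Nsum n m"
      have M0: "M \<ge> 1" unfolding M_def by simp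
      define c where "c = min (nat \<lfloor>x * M\<rfloor>) (M - 1)"
      have cM: "c < M" using M0 unfolding c_def by auto
      have xM: "0 \<le> x * M" using x by simp
      have fl: "real (nat \<lfloor>x * M\<rfloor>) = of_int \<lfloor>x * M\<rfloor>" using xM by simp
      have fl2: "of_int \<lfloor>x * M\<rfloor> \<le> x * M" by simp
      have lo: "real c \<le> x * M"
      proof (cases "nat \<lfloor>x * M\<rfloor> \<le> M - 1")
        case True
        then have "c = nat \<lfloor>x * M\<rfloor>" unfolding c_def by simp
        then show ?thesis using fl fl2 by simp
      next
        case False
        then have c: "c = M - 1" unfolding c_def by simp
        have "M \<le> nat \<lfloor>x * M\<rfloor>" using False M0 by simp
        then have "real M \<le> real (nat \<lfloor>x * M\<rfloor>)" by (simp only: of_nat_le_iff)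
        moreover have "real c \<le> real M" using c by simp
        ultimately show ?thesis using fl fl2 by linarith
      qed
      have hi: "x * M \<le> real c + 1"
      proof (cases "nat \<lfloor>x * M\<rfloor> \<le> M - 1")
        case True
        then have "c = nat \<lfloor>x * M\<rfloor>" unfolding c_def by simp
        moreover have "x * M \<ge> 0" using x by simp
        moreover have "x * M < real_of_int \<lfloor>x * M\<rfloor> + 1" by linarith
        ultimately show ?thesis by simp
      next
        case False
        then have "c = M - 1" unfolding c_def by simp
        then have "real c + 1 = M" using M0 by (simp add: of_nat_diff)
        then show ?thesis using x M0 by (simp add: mult_left_le)
      qed
      obtain P where P: "P \<in> Cs m" "fst P = c" using cc_C[OF assms(3), of c m] cM M_def by auto
      have Mr: "real M = 4 ^ Nsum n m" unfolding M_def by simp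
      have Mp: "(0::real) < 4 ^ Nsum n m" by simp
      have l1: "real c / 4 ^ Nsum n m \<le> x" using lo Mr Mp by (simp add: divide_le_eq)
      have l2: "x \<le> real (c + 1) / 4 ^ Nsum n m" using hi Mr Mp by (simp add: le_divide_eq)
      have l3: "real (snd P) / 4 ^ Nsum n m \<le> real (snd P + 1) / 4 ^ Nsum n m"
        using Mp by (simp add: divide_right_mono)
      have "(x, real (snd P) / 4 ^ Nsum n m) \<in> sq n m P"
        unfolding sq_def using l1 l2 l3 P(2) by (simp add: mem_Times_iff)
      then show ?thesis unfolding S_def using P(1) by blast
    qed
    have dec: "S (Suc m) \<subseteq> S m" for m
    proof
      fix q assume "q \<in> S (Suc m)"
      then obtain P where P: "P \<in> Cs (Suc m)" "q \<in> sq n (Suc m) P" "fst q = x"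
        unfolding S_def by (auto simp: mem_Times_iff)
      obtain Q where Q: "Q \<in> Cs m" "inside (n (Suc m)) Q P" using cc_A[OF assms(3) P(1)] by blast
      have "q \<in> sq n m Q" using sq_sub[where n=n and m=m, OF Q(2)] P(2) by blast
      then show "q \<in> S m" unfolding S_def using Q(1) P(3) by (auto simp: mem_Times_iff)
    qed
    have ds: "decseq S" by (rule decseq_SucI) (rule dec)
    have mono: "m \<le> k \<Longrightarrow> S k \<subseteq> S m" for m k
      using decseqD[OF ds] by blast
    obtain p where p: "p \<in> \<Inter>(range S)" using compact_nest[of S, OF comp ne mono] by blast
    have pS: "p \<in> S m" for m using p by blast
    have "p \<in> cantor_set n Cs" unfolding cantor_set_def
    proof
      fix m :: nat assume "m \<in> {1..}"
      show "p \<in> \<Union> (sq n m ` Cs m)" using pS[of m] unfolding S_def by blast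
    qed
    moreover have "fst p = x" using pS[of 0] unfolding S_def by (auto simp: mem_Times_iff)
    ultimately show "x \<in> fst ` cantor_set n Cs" by (metis image_eqI)
  qed
qed

end
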